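(* Let $m\ge1$ and let $\{P^0=I^{\otimes m},P^1,\ldots,P^{2^m-1}\}\subset\mathcal{P}_m$ be a set of distinct Pauli strings with no non-unit prefactors that is closed under multiplication up to constants, i.e. $P^i\ne P^j$ for $i\ne j$ and for all $i,j$ there is $k$ with $P^iP^j\propto P^k$. Then there exists a state $\ket\phi\in(\mathbb{C}^2)^{\otimes m}$ such that $\bra\phi P^i\ket\phi=0$ for all $i\ne0$.
   Context: $\mathcal{P}_m$ is the $m$-qubit Pauli group: all operators $i^\lambda O_1\otimes\cdots\otimes O_m$ with $\lambda\in\{0,1,2,3\}$ and $O_j\in\{I,X,Y,Z\}$; a Pauli string with no non-unit prefactor is one with $\lambda=0$. *)

theory Defs
  imports Complex_Main
begin

text \<open>Single-qubit Pauli operators I, X, Y, Z.  Computational basis states are indexed by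
  bool (False = |0>, True = |1>); pmat O r c is the (r,c) matrix entry of O.\<close>

datatype pauli = PI | PX | PY | PZ

fun pmat :: "pauli \<Rightarrow> bool \<Rightarrow> bool \<Rightarrow> complex" where
  "pmat PI r c = (if r = c then 1 else 0)"
| "pmat PX r c = (if r = c then 0 else 1)"
| "pmat PY r c = (if r = c then 0 else (if r then \<i> else - \<i>))"
| "pmat PZ r c = (if r = c then (if r then -1 else 1) else 0)"

text \<open>Basis of (C^2)^{\<otimes> m}: bit strings of length m.\<close>
definition bitstrings :: "nat \<Rightarrow> bool list set" where
  "bitstrings m = {b. length b = m}"

text \<open>A Pauli string with unit prefactor O_1 \<otimes> ... \<otimes> O_m is a list of length m;
  its matrix entries in the computational basis are products of single-qubit entries.\<close>
definition pstr_entry :: "pauli list \<Rightarrow> bool list \<Rightarrow> bool list \<Rightarrow> complex" where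
  "pstr_entry P b c = (\<Prod>j<length P. pmat (P ! j) (b ! j) (c ! j))"

definition pstr_prod_entry :: "nat \<Rightarrow> pauli list \<Rightarrow> pauli list \<Rightarrow> bool list \<Rightarrow> bool list \<Rightarrow> complex" where
  "pstr_prod_entry m P Q b c = (\<Sum>d\<in>bitstrings m. pstr_entry P b d * pstr_entry Q d c)"

definition prop_to :: "nat \<Rightarrow> (bool list \<Rightarrow> bool list \<Rightarrow> complex) \<Rightarrow> pauli list \<Rightarrow> bool" where
  "prop_to m A R = (\<exists>s::complex. \<forall>b\<in>bitstrings m. \<forall>c\<in>bitstrings m. A b c = s * pstr_entry R b c)"

definition expval :: "nat \<Rightarrow> pauli list \<Rightarrow> (bool list \<Rightarrow> complex) \<Rightarrow> complex" where
  "expval m P \<phi> = (\<Sum>b\<in>bitstrings m. \<Sum>c\<in>bitstrings m. cnj (\<phi> b) * pstr_entry P b c * \<phi> c)"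

definition is_state :: "nat \<Rightarrow> (bool list \<Rightarrow> complex) \<Rightarrow> bool" where
  "is_state m \<phi> = ((\<Sum>b\<in>bitstrings m. (cmod (\<phi> b))\<^sup>2) = 1)"

end

theory Submission
  imports Defs
begin


fun dot :: "bool list \<Rightarrow> bool list \<Rightarrow> bool" where
  "dot (a#as) (b#bs) = ((a \<and> b) \<noteq> dot as bs)"
| "dot _ _ = False"

fun bxor :: "bool list \<Rightarrow> bool list \<Rightarrow> bool list" where
  "bxor (a#as) (b#bs) = (a \<noteq> b) # bxor as bs"
| "bxor _ _ = []"

definition sg :: "bool \<Rightarrow> complex" where "sg t = (if t then -1 else 1)"

definition io :: "bool \<Rightarrow> complex" where "io d = (if d then \<i> else 1)"

definition EE :: "nat \<Rightarrow> bool list \<Rightarrow> bool list \<Rightarrow> (bool list \<Rightarrow> complex) \<Rightarrow> complex" where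
  "EE n x z \<phi> = (\<Sum>b\<in>bitstrings n. cnj (\<phi> b) * sg (dot z (bxor b x)) * \<phi> (bxor b x))"

fun st :: "(bool \<times> bool list) list \<Rightarrow> bool list \<Rightarrow> complex" where
  "st ((d,c)#g) (\<beta>#b) = (if \<beta> then io d * sg (dot c b) else 1) * st g b"
| "st _ _ = 1"

fun params :: "nat \<Rightarrow> (bool \<times> bool list) list set" where
  "params 0 = {[]}"
| "params (Suc n) = (\<lambda>(d,c,g). (d,c)#g) ` (UNIV \<times> bitstrings n \<times> params n)"

lemma length_bxor[simp]: "length (bxor a b) = min (length a) (length b)"
  by (induction a b rule: bxor.induct) auto

lemma bitstrings_Suc: "bitstrings (Suc n) = (\<lambda>(\<beta>,b). \<beta>#b) ` (UNIV \<times> bitstrings n)"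
  unfolding bitstrings_def
  by (auto simp: image_def length_Suc_conv)

lemma finite_bitstrings[simp]: "finite (bitstrings n)"
  by (induction n) (auto simp: bitstrings_Suc, simp add: bitstrings_def)

lemma inj_cons2: "inj_on (\<lambda>(\<beta>::'a,b). \<beta>#b) A"
  by (auto simp: inj_on_def)

lemma card_bitstrings[simp]: "card (bitstrings n) = 2^n"
proof (induction n)
  case 0 then show ?case by (simp add: bitstrings_def)
next
  case (Suc n)
  then show ?case unfolding bitstrings_Suc
    by (simp add: card_image[OF inj_cons2] card_cartesian_product)
qed

lemma sum_bool: "(\<Sum>\<beta>\<in>(UNIV::bool set). f \<beta>) = f True + f False"
  by (simp add: UNIV_bool add.commute)

lemma sum_bitstrings_Suc:
  "(\<Sum>b\<in>bitstrings (Suc n). f b) = (\<Sum>\<beta>\<in>UNIV. \<Sum>b\<in>bitstrings n. f (\<beta>#b))"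
  unfolding bitstrings_Suc sum.reindex[OF inj_cons2]
  by (simp add: sum.cartesian_product split_beta)

lemma inj_params: "inj_on (\<lambda>(d,c,g). (d,c)#g) A"
  by (auto simp: inj_on_def)

lemma finite_params[simp]: "finite (params n)"
  by (induction n) auto

lemma card_params_Suc: "card (params (Suc n)) = 2 * (2^n * card (params n))"
  by (simp add: card_image[OF inj_params] card_cartesian_product)

lemma sum_params_Suc:
  "(\<Sum>g\<in>params (Suc n). f g) = (\<Sum>d\<in>UNIV. \<Sum>c\<in>bitstrings n. \<Sum>g\<in>params n. f ((d,c)#g))"
  unfolding params.simps sum.reindex[OF inj_params]
  by (simp add: sum.cartesian_product split_beta)

lemma sg_xor: "sg (a \<noteq> b) = sg a * sg b"
  by (simp add: sg_def)

lemma sg_sq[simp]: "sg a * sg a = 1" by (simp add: sg_def)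
lemma cnj_sg[simp]: "cnj (sg a) = sg a" by (simp add: sg_def)
lemma cmod_sg[simp]: "cmod (sg a) = 1" by (simp add: sg_def)
lemma cnj_io_io[simp]: "cnj (io d) * io d = 1" by (simp add: io_def)
lemma cmod_io[simp]: "cmod (io d) = 1" by (simp add: io_def)

lemma cmod_st: "cmod (st g b) = 1"
  by (induction g b rule: st.induct) (auto simp: norm_mult)

lemma dot_bxor: "length c = length b \<Longrightarrow> length b = length x \<Longrightarrow>
   dot c (bxor b x) = (dot c b \<noteq> dot c x)"
proof (induction c arbitrary: b x)
  case Nil then show ?case by simp
next
  case (Cons a c)
  then obtain \<beta> b' \<xi> x' where "b = \<beta>#b'" "x = \<xi>#x'"
    by (metis length_Suc_conv)
  with Cons show ?case by auto
qed

lemma dot_bxor2: "length z = length y \<Longrightarrow> length c = length y \<Longrightarrow>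
   dot (bxor z c) y = (dot z y \<noteq> dot c y)"
proof (induction y arbitrary: z c)
  case Nil then show ?case by simp
next
  case (Cons a y)
  then obtain \<beta> z' \<xi> c' where "z = \<beta>#z'" "c = \<xi>#c'"
    by (metis length_Suc_conv)
  with Cons show ?case by auto
qed

lemma dot_zero[simp]: "dot c (replicate n False) = False"
  by (induction c arbitrary: n) (auto, case_tac n, auto)

lemma bxor_zero: "length z = length c \<Longrightarrow> bxor z c = replicate (length z) False \<Longrightarrow> c = z"
proof (induction z arbitrary: c)
  case Nil then show ?case by simp
next
  case (Cons a z)
  then obtain \<xi> c' where "c = \<xi>#c'" by (metis length_Suc_conv)
  with Cons show ?case by auto
qed



definition xs_of :: "pauli list \<Rightarrow> bool list" where
  "xs_of P = map (\<lambda>Q. Q = PX \<or> Q = PY) P"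
definition zs_of :: "pauli list \<Rightarrow> bool list" where
  "zs_of P = map (\<lambda>Q. Q = PY \<or> Q = PZ) P"
fun ph :: "pauli list \<Rightarrow> complex" where
  "ph [] = 1"
| "ph (Q#P) = (if Q = PY then \<i> else 1) * ph P"

lemma sg_xor': "sg (a = (\<not> b)) = sg a * sg b" by (simp add: sg_def)

lemma pstr_entry_Nil[simp]: "pstr_entry [] b c = 1"
  by (simp add: pstr_entry_def)

lemma pstr_entry_Cons: "pstr_entry (Q#P) (\<beta>#b) (\<gamma>#c) = pmat Q \<beta> \<gamma> * pstr_entry P b c"
  unfolding pstr_entry_def length_Cons prod.lessThan_Suc_shift by simp

lemma pmat_formula: "pmat Q \<beta> \<gamma> = (if \<gamma> = (\<beta> \<noteq> (Q = PX \<or> Q = PY))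
     then (if Q = PY then \<i> else 1) * sg ((Q = PY \<or> Q = PZ) \<and> \<gamma>) else 0)"
  by (cases Q; cases \<beta>; cases \<gamma>; simp add: sg_def)

lemma pstr_entry_formula:
  "length b = length P \<Longrightarrow> length c = length P \<Longrightarrow>
   pstr_entry P b c = (if c = bxor b (xs_of P) then ph P * sg (dot (zs_of P) c) else 0)"
proof (induction P arbitrary: b c)
  case Nil then show ?case by (simp add: xs_of_def sg_def)
next
  case (Cons Q P)
  then obtain \<beta> b' \<gamma> c' where bc: "b = \<beta>#b'" "c = \<gamma>#c'"
    by (metis length_Suc_conv)
  with Cons.prems have l: "length b' = length P" "length c' = length P" by auto
  show ?case using Cons.IH[OF l]
    by (cases Q; cases \<beta>; cases \<gamma>; simp add: bc pstr_entry_Cons xs_of_def zs_of_def sg_def)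
qed

lemma expval_EE: "length P = m \<Longrightarrow> expval m P \<phi> = ph P * EE m (xs_of P) (zs_of P) \<phi>"
proof -
  assume l: "length P = m"
  have "expval m P \<phi> = (\<Sum>b\<in>bitstrings m. ph P * (cnj (\<phi> b) * sg (dot (zs_of P) (bxor b (xs_of P))) * \<phi> (bxor b (xs_of P))))"
    unfolding expval_def
  proof (rule sum.cong[OF refl])
    fix b assume b: "b \<in> bitstrings m"
    have t: "bxor b (xs_of P) \<in> bitstrings m" using b l by (simp add: bitstrings_def xs_of_def)
    have "(\<Sum>c\<in>bitstrings m. cnj (\<phi> b) * pstr_entry P b c * \<phi> c)
       = (\<Sum>c\<in>bitstrings m. if c = bxor b (xs_of P) then cnj (\<phi> b) * (ph P * sg (dot (zs_of P) c)) * \<phi> c else 0)"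
      by (rule sum.cong[OF refl]) (use b l in \<open>simp add: pstr_entry_formula bitstrings_def\<close>)
    also have "\<dots> = ph P * (cnj (\<phi> b) * sg (dot (zs_of P) (bxor b (xs_of P))) * \<phi> (bxor b (xs_of P)))"
      using t by (simp add: sum.delta')
    finally show "(\<Sum>c\<in>bitstrings m. cnj (\<phi> b) * pstr_entry P b c * \<phi> c) = ph P * (cnj (\<phi> b) * sg (dot (zs_of P) (bxor b (xs_of P))) * \<phi> (bxor b (xs_of P)))" .
  qed
  then show ?thesis by (simp add: EE_def sum_distrib_left)
qed

lemma EE_rec:
  assumes x: "x' \<in> bitstrings n" and z: "z' \<in> bitstrings n" and c: "c \<in> bitstrings n"
  shows "EE (Suc n) (\<xi>#x') (\<zeta>#z') (st ((d,c)#g)) =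
    (if \<xi> then (sg \<zeta> * io d + cnj (io d) * sg (dot c x')) * EE n x' (bxor z' c) (st g)
     else (1 + sg \<zeta> * sg (dot c x')) * EE n x' z' (st g))"
proof -
  define inner where "inner w b = cnj (st g b) * sg (dot w (bxor b x')) * st g (bxor b x')" for w b
  have L: "length b = n \<Longrightarrow> length (bxor b x') = n" for b using x by (simp add: bitstrings_def)
  have E1: "EE n x' w (st g) = (\<Sum>b\<in>bitstrings n. inner w b)" for w
    by (simp add: EE_def inner_def)
  show ?thesis
  proof (cases \<xi>)
    case False
    have "EE (Suc n) (\<xi>#x') (\<zeta>#z') (st ((d,c)#g)) =
        (\<Sum>b\<in>bitstrings n. sg \<zeta> * sg (dot c x') * inner z' b) + (\<Sum>b\<in>bitstrings n. inner z' b)"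
      unfolding EE_def sum_bitstrings_Suc sum_bool
    proof (intro arg_cong2[where f="(+)"] sum.cong refl)
      fix b assume b: "b \<in> bitstrings n"
      have db: "dot c (bxor b x') = (dot c b \<noteq> dot c x')"
        using b c x by (intro dot_bxor) (auto simp: bitstrings_def)
      show "cnj (st ((d, c) # g) (True # b)) * sg (dot (\<zeta> # z') (bxor (True # b) (\<xi> # x'))) *
         st ((d, c) # g) (bxor (True # b) (\<xi> # x')) = sg \<zeta> * sg (dot c x') * inner z' b"
      proof -
        have "cnj (st ((d, c) # g) (True # b)) * sg (dot (\<zeta> # z') (bxor (True # b) (\<xi> # x'))) *
         st ((d, c) # g) (bxor (True # b) (\<xi> # x')) = (cnj (io d) * io d) * (sg (dot c b) * sg (dot c b)) * (sg \<zeta> * sg (dot c x') * inner z' b)"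
          using False by (simp add: inner_def db sg_xor sg_xor' mult_ac)
        then show ?thesis by simp
      qed
      show "cnj (st ((d, c) # g) (False # b)) * sg (dot (\<zeta> # z') (bxor (False # b) (\<xi> # x'))) *
         st ((d, c) # g) (bxor (False # b) (\<xi> # x')) = inner z' b"
        using False by (simp add: inner_def)
    qed
    then show ?thesis using False by (simp add: E1 sum_distrib_left[symmetric] distrib_right)
  next
    case True
    have "EE (Suc n) (\<xi>#x') (\<zeta>#z') (st ((d,c)#g)) =
        (\<Sum>b\<in>bitstrings n. cnj (io d) * sg (dot c x') * inner (bxor z' c) b) + (\<Sum>b\<in>bitstrings n. sg \<zeta> * io d * inner (bxor z' c) b)"
      unfolding EE_def sum_bitstrings_Suc sum_bool
    proof (intro arg_cong2[where f="(+)"] sum.cong refl)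
      fix b assume b: "b \<in> bitstrings n"
      have db: "dot c (bxor b x') = (dot c b \<noteq> dot c x')"
        using b c x by (intro dot_bxor) (auto simp: bitstrings_def)
      have dz: "dot (bxor z' c) (bxor b x') = (dot z' (bxor b x') \<noteq> dot c (bxor b x'))"
        using b c x z by (intro dot_bxor2) (auto simp: bitstrings_def)
      show "cnj (st ((d, c) # g) (True # b)) * sg (dot (\<zeta> # z') (bxor (True # b) (\<xi> # x'))) *
         st ((d, c) # g) (bxor (True # b) (\<xi> # x')) = cnj (io d) * sg (dot c x') * inner (bxor z' c) b"
      proof -
        have "cnj (st ((d, c) # g) (True # b)) * sg (dot (\<zeta> # z') (bxor (True # b) (\<xi> # x'))) *
         st ((d, c) # g) (bxor (True # b) (\<xi> # x')) = (sg (dot c (bxor b x')) * sg (dot c (bxor b x'))) * (cnj (io d) * sg (dot c x') * inner (bxor z' c) b)"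
          using True by (simp add: inner_def db dz sg_def mult_ac)
        then show ?thesis by simp
      qed
      show "cnj (st ((d, c) # g) (False # b)) * sg (dot (\<zeta> # z') (bxor (False # b) (\<xi> # x'))) *
         st ((d, c) # g) (bxor (False # b) (\<xi> # x')) = sg \<zeta> * io d * inner (bxor z' c) b"
      proof -
        have "cnj (st ((d, c) # g) (False # b)) * sg (dot (\<zeta> # z') (bxor (False # b) (\<xi> # x'))) *
         st ((d, c) # g) (bxor (False # b) (\<xi> # x')) = (sg (dot c (bxor b x')) * sg (dot c (bxor b x'))) * (sg \<zeta> * io d * inner (bxor z' c) b)"
          using True by (simp add: inner_def dz sg_def mult_ac)
        then show ?thesis by simp
      qed
    qed
    then show ?thesis using True by (simp add: E1 sum_distrib_left[symmetric] distrib_right add.commute)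
  qed
qed



lemma parity:
  "x \<in> bitstrings n \<Longrightarrow> x \<noteq> replicate n False \<Longrightarrow>
   (\<Sum>c\<in>bitstrings n. if dot c x = t then 1 else 0::nat) * 2 = 2^n"
proof (induction n arbitrary: x t)
  case 0 then show ?case by (simp add: bitstrings_def)
next
  case (Suc n)
  then obtain \<xi> x' where x: "x = \<xi>#x'" and x': "x' \<in> bitstrings n"
    by (auto simp: bitstrings_def length_Suc_conv)
  show ?case
  proof (cases "x' = replicate n False")
    case False
    have h: "(\<Sum>c\<in>bitstrings n. if ((a \<and> \<xi>) \<noteq> dot c x') = t then 1 else 0::nat) * 2 = 2^n" for a
    proof -
      have "(\<Sum>c\<in>bitstrings n. if ((a \<and> \<xi>) \<noteq> dot c x') = t then 1 else 0::nat)
          = (\<Sum>c\<in>bitstrings n. if dot c x' = ((a \<and> \<xi>) \<noteq> t) then 1 else 0::nat)"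
        by (rule sum.cong) auto
      then show ?thesis using Suc.IH[OF x' False] by simp
    qed
    show ?thesis unfolding sum_bitstrings_Suc sum_bool x
      using h[of True] h[of False] by simp
  next
    case True
    with Suc.prems x have \<xi>: "\<xi>" by auto
    have h: "(\<Sum>c\<in>bitstrings n. if dot (a#c) x = t then 1 else 0::nat) = (if a = t then 2^n else 0)" for a
      using True \<xi> x by (simp add: sum.neutral)
    show ?thesis unfolding sum_bitstrings_Suc sum_bool h by auto
  qed
qed

lemma coefF: "(1 + sg \<zeta> * sg a \<noteq> 0) = (a = \<zeta>)"
  by (simp add: sg_def)

lemma coefT: "(sg \<zeta> * io d + cnj (io d) * sg a \<noteq> 0) = (d = (\<zeta> \<noteq> a))"
  by (cases d; cases \<zeta>; cases a; simp add: sg_def io_def)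

lemma EE_nz:
  assumes "x' \<in> bitstrings n" "z' \<in> bitstrings n" "c \<in> bitstrings n"
  shows "(EE (Suc n) (\<xi>#x') (\<zeta>#z') (st ((d,c)#g)) \<noteq> 0) =
    (if \<xi> then d = (\<zeta> \<noteq> dot c x') \<and> EE n x' (bxor z' c) (st g) \<noteq> 0
     else dot c x' = \<zeta> \<and> EE n x' z' (st g) \<noteq> 0)"
  using coefF coefT by (simp add: EE_rec[OF assms])

definition N :: "nat \<Rightarrow> bool list \<Rightarrow> bool list \<Rightarrow> nat" where
  "N n x z = (\<Sum>g\<in>params n. if EE n x z (st g) \<noteq> 0 then 1 else 0)"

lemma count:
  "x \<in> bitstrings n \<Longrightarrow> z \<in> bitstrings n \<Longrightarrow>
   (x = replicate n False \<longrightarrow> (\<forall>g\<in>params n. EE n x z (st g) \<noteq> 0 \<longrightarrow> z = replicate n False)) \<and>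
   (x \<noteq> replicate n False \<longrightarrow> N n x z * 2^n \<le> card (params n))"
proof (induction n arbitrary: x z)
  case 0 then show ?case by (simp add: bitstrings_def)
next
  case (Suc n)
  then obtain \<xi> x' \<zeta> z' where x: "x = \<xi>#x'" and x': "x' \<in> bitstrings n"
     and z: "z = \<zeta>#z'" and z': "z' \<in> bitstrings n"
    by (auto simp: bitstrings_def length_Suc_conv)
  define K where "K = card (params n)"
  have bxz: "bxor z' c \<in> bitstrings n" if "c \<in> bitstrings n" for c
    using that z' by (simp add: bitstrings_def)
  have Nsum: "N (Suc n) x z = (\<Sum>d\<in>UNIV. \<Sum>c\<in>bitstrings n. \<Sum>g\<in>params n.
      if (if \<xi> then d = (\<zeta> \<noteq> dot c x') \<and> EE n x' (bxor z' c) (st g) \<noteq> 0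
          else dot c x' = \<zeta> \<and> EE n x' z' (st g) \<noteq> 0) then 1 else 0)"
    unfolding N_def sum_params_Suc x z
    by (intro sum.cong refl) (simp only: EE_nz[OF x' z'])
  show ?case
  proof (intro conjI impI)
    assume x0: "x = replicate (Suc n) False"
    then have "\<not> \<xi>" "x' = replicate n False" using x by auto
    show "\<forall>g\<in>params (Suc n). EE (Suc n) x z (st g) \<noteq> 0 \<longrightarrow> z = replicate (Suc n) False"
    proof (intro ballI impI)
      fix g assume g: "g \<in> params (Suc n)" and nz: "EE (Suc n) x z (st g) \<noteq> 0"
      then obtain d c g' where gg: "g = (d,c)#g'" and c: "c \<in> bitstrings n" and g': "g' \<in> params n"
        by auto
      from nz have "dot c x' = \<zeta> \<and> EE n x' z' (st g') \<noteq> 0"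
        using EE_nz[OF x' z' c, of \<xi> \<zeta> d g'] \<open>\<not> \<xi>\<close> by (simp add: x z gg)
      then show "z = replicate (Suc n) False"
        using Suc.IH[OF x' z'] g' \<open>x' = replicate n False\<close> z by auto
    qed
  next
    assume xn: "x \<noteq> replicate (Suc n) False"
    show "N (Suc n) x z * 2 ^ Suc n \<le> card (params (Suc n))"
    proof (cases \<xi>)
      case False
      then have x'n: "x' \<noteq> replicate n False" using xn x by auto
      define PC where "PC = (\<Sum>c\<in>bitstrings n. if dot c x' = \<zeta> then 1 else 0::nat)"
      have PC: "PC * 2 = 2^n" unfolding PC_def by (rule parity[OF x' x'n])
      have IH: "N n x' z' * 2^n \<le> K" using Suc.IH[OF x' z'] x'n by (simp add: K_def)
      have "N (Suc n) x z = (\<Sum>d\<in>(UNIV::bool set). \<Sum>c\<in>bitstrings n. (if dot c x' = \<zeta> then 1 else 0) * N n x' z')"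
        unfolding Nsum using False
        by (intro sum.cong refl) (auto simp: N_def)
      also have "\<dots> = 2 * (PC * N n x' z')"
        by (simp add: PC_def sum_distrib_right sum_bool)
      finally have "N (Suc n) x z * 2 ^ Suc n = 2 * 2^n * (N n x' z' * 2^n)"
        using PC by (simp add: mult_ac)
      also have "\<dots> \<le> 2 * 2^n * K" using IH by simp
      finally show ?thesis unfolding card_params_Suc K_def by (simp add: mult_ac)
    next
      case True
      show ?thesis
      proof (cases "x' = replicate n False")
        case False
        have IH: "N n x' (bxor z' c) * 2^n \<le> K" if "c \<in> bitstrings n" for c
          using Suc.IH[OF x' bxz[OF that]] False by (simp add: K_def)
        have "N (Suc n) x z = (\<Sum>d\<in>(UNIV::bool set). \<Sum>c\<in>bitstrings n. (if d = (\<zeta> \<noteq> dot c x') then N n x' (bxor z' c) else 0))"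
          unfolding Nsum using True
          by (intro sum.cong refl) (auto simp: N_def)
        also have "\<dots> = (\<Sum>c\<in>bitstrings n. N n x' (bxor z' c))"
          by (subst sum.swap) (simp add: sum_bool, intro sum.cong refl, auto)
        finally have "N (Suc n) x z * 2 ^ Suc n = 2 * (\<Sum>c\<in>bitstrings n. N n x' (bxor z' c) * 2^n)"
          by (simp add: sum_distrib_right sum_distrib_left mult_ac)
        also have "\<dots> \<le> 2 * (\<Sum>c\<in>bitstrings n. K)"
          using IH sum_mono[of "bitstrings n" "\<lambda>c. N n x' (bxor z' c) * 2^n" "\<lambda>c. K"] by simp
        finally show ?thesis unfolding card_params_Suc K_def by (simp add: mult_ac)
      next
        case x'0: True
        have le: "(if (d = (\<zeta> \<noteq> dot c x') \<and> EE n x' (bxor z' c) (st g) \<noteq> 0) then 1 else 0::nat)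
           \<le> (if d = (\<zeta> \<noteq> dot c x') \<and> c = z' then 1 else 0)"
          if "c \<in> bitstrings n" "g \<in> params n" for d c g
        proof -
          have "EE n x' (bxor z' c) (st g) \<noteq> 0 \<Longrightarrow> c = z'"
            using Suc.IH[OF x' bxz[OF that(1)]] x'0 that bxor_zero[of z' c] z'
            by (auto simp: bitstrings_def)
          then show ?thesis by auto
        qed
        have "N (Suc n) x z \<le> (\<Sum>d\<in>(UNIV::bool set). \<Sum>c\<in>bitstrings n. \<Sum>g\<in>params n.
               (if d = (\<zeta> \<noteq> dot c x') \<and> c = z' then 1 else 0))"
          unfolding Nsum using True le by (intro sum_mono) auto
        also have "\<dots> = (\<Sum>d\<in>(UNIV::bool set). \<Sum>c\<in>bitstrings n. if c = z' then (if d = (\<zeta> \<noteq> dot z' x') then K else 0) else 0)"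
          by (intro sum.cong refl) (auto simp: K_def)
        also have "\<dots> = (\<Sum>d\<in>(UNIV::bool set). if d = (\<zeta> \<noteq> dot z' x') then K else 0)"
          using z' by (simp add: sum.delta')
        also have "\<dots> = K" by (simp add: sum_bool)
        finally have "N (Suc n) x z * 2 ^ Suc n \<le> K * 2 ^ Suc n" by simp
        then show ?thesis unfolding card_params_Suc K_def by (simp add: mult_ac)
      qed
    qed
  qed
qed



lemma params_ne: "params n \<noteq> {}"
proof (induction n)
  case 0 then show ?case by simp
next
  case (Suc n)
  have r: "replicate n False \<in> bitstrings n" by (simp add: bitstrings_def)
  from Suc obtain g where g: "g \<in> params n" by auto
  have "(False, replicate n False) # g \<in> params (Suc n)"
    unfolding params.simps
    by (rule image_eqI[where x="(False, replicate n False, g)"]) (use r g in auto)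
  then show ?case by auto
qed

lemma N_card: "N n x z = card {g\<in>params n. EE n x z (st g) \<noteq> 0}"
  unfolding N_def by (simp only: sum.inter_filter[OF finite_params, symmetric] card_eq_sum)

lemma EE_scale: "EE n x z (\<lambda>b. f b * complex_of_real r) = complex_of_real (r*r) * EE n x z f"
  unfolding EE_def by (simp add: sum_distrib_left mult_ac)

lemma all_PI: "xs_of P = replicate (length P) False \<Longrightarrow> zs_of P = replicate (length P) False \<Longrightarrow>
   P = replicate (length P) PI"
proof (induction P)
  case Nil then show ?case by simp
next
  case (Cons Q P)
  then show ?case by (cases Q) (auto simp: xs_of_def zs_of_def)
qed

theorem mainTheorem14:
  fixes m :: nat and P :: "nat \<Rightarrow> pauli list"
  assumes "m \<ge> 1"
    and "\<forall>i<2^m. length (P i) = m"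
    and "P 0 = replicate m PI"
    and "inj_on P {..<2^m}"
    and "\<forall>i<2^m. \<forall>j<2^m. \<exists>k<2^m. prop_to m (pstr_prod_entry m (P i) (P j)) (P k)"
  shows "\<exists>\<phi>. is_state m \<phi> \<and> (\<forall>i. 0 < i \<and> i < 2^m \<longrightarrow> expval m (P i) \<phi> = 0)"
proof -
  note len = assms(2)
  have xb: "xs_of (P i) \<in> bitstrings m" "zs_of (P i) \<in> bitstrings m" if "i < 2^m" for i
    using len that by (auto simp: bitstrings_def xs_of_def zs_of_def)
  define I where "I = {i. 0 < i \<and> i < (2::nat)^m \<and> xs_of (P i) \<noteq> replicate m False}"
  define bad where "bad i = {g\<in>params m. EE m (xs_of (P i)) (zs_of (P i)) (st g) \<noteq> 0}" for i
  define B where "B = (\<Union>i\<in>I. bad i)"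
  define K where "K = card (params m)"
  have Kpos: "K > 0" unfolding K_def using params_ne finite_params by (simp add: card_gt_0_iff)
  have finI: "finite I" unfolding I_def by auto
  have cardI: "card I \<le> 2^m - 1"
  proof -
    have "I \<subseteq> {1..<2^m}" unfolding I_def by auto
    then show ?thesis using card_mono[of "{1..<2^m}" I] by simp
  qed
  have badi: "card (bad i) * 2^m \<le> K" if "i \<in> I" for i
  proof -
    from that have i: "i < 2^m" "xs_of (P i) \<noteq> replicate m False" by (auto simp: I_def)
    have "N m (xs_of (P i)) (zs_of (P i)) * 2^m \<le> card (params m)"
      using count[OF xb(1)[OF i(1)] xb(2)[OF i(1)]] i(2) by blast
    then show ?thesis unfolding bad_def K_def N_card .
  qed
  have "card B * 2^m \<le> (\<Sum>i\<in>I. card (bad i)) * 2^m"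
    unfolding B_def using card_UN_le[OF finI, of bad] by simp
  also have "\<dots> = (\<Sum>i\<in>I. card (bad i) * 2^m)" by (simp add: sum_distrib_right)
  also have "\<dots> \<le> (\<Sum>i\<in>I. K)" using badi by (intro sum_mono) auto
  also have "\<dots> = card I * K" by simp
  also have "\<dots> \<le> (2^m - 1) * K" using cardI by simp
  also have "\<dots> < 2^m * K" using Kpos by simp
  finally have lt: "card B * 2^m < 2^m * K" .
  then have cB: "card B < K" by (metis mult.commute mult_less_cancel2)
  have "\<not> params m \<subseteq> B"
  proof
    assume "params m \<subseteq> B"
    then have "card (params m) \<le> card B" by (rule card_mono[rotated]) (simp add: B_def bad_def finI)
    then show False using cB unfolding K_def by simp
  qed
  then obtain g where g: "g \<in> params m" "g \<notin> B" by blast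
  define r :: real where "r = 1 / sqrt (2^m)"
  define \<phi> where "\<phi> b = st g b * complex_of_real r" for b
  have rr: "r * r = 1 / 2^m" unfolding r_def
    by (simp add: real_sqrt_mult[symmetric] power_mult_distrib[symmetric])
  have "is_state m \<phi>"
  proof -
    have "(\<Sum>b\<in>bitstrings m. (cmod (\<phi> b))\<^sup>2) = (\<Sum>b\<in>bitstrings m. r * r)"
      by (intro sum.cong refl) (simp add: \<phi>_def norm_mult cmod_st power2_eq_square abs_mult_self_eq)
    also have "\<dots> = 1" using rr by simp
    finally show ?thesis by (simp add: is_state_def)
  qed
  moreover have "expval m (P i) \<phi> = 0" if i: "0 < i" "i < 2^m" for i
  proof -
    have "EE m (xs_of (P i)) (zs_of (P i)) (st g) = 0"
    proof (cases "i \<in> I")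
      case True
      then show ?thesis using g unfolding B_def bad_def by auto
    next
      case False
      then have x0: "xs_of (P i) = replicate m False" using i unfolding I_def by auto
      show ?thesis
      proof (rule ccontr)
        assume nz: "EE m (xs_of (P i)) (zs_of (P i)) (st g) \<noteq> 0"
        have "zs_of (P i) = replicate m False"
          using count[OF xb(1)[OF i(2)] xb(2)[OF i(2)]] x0 g(1) nz by blast
        then have "P i = replicate m PI" using all_PI[of "P i"] x0 len i by auto
        then have "P i = P 0" using assms(3) by simp
        then have "i = 0" using assms(4) i by (auto dest: inj_onD)
        then show False using i by simp
      qed
    qed
    moreover have "\<phi> = (\<lambda>b. st g b * complex_of_real r)" by (simp add: \<phi>_def fun_eq_iff)
    ultimately show ?thesis using len i by (simp add: expval_EE EE_scale)
  qed
  ultimately show ?thesis by blast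
qed


end
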